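(* Let $q$ be a prime power, $n=q^4-1$, and let $0\le a_2,a_3<q$ with $a_2+a_3<q-1$. Then the interlude $[(a_2,a_3,a_2,a_3),(a_2+1,a_3,a_2+1,a_3)]_M$ contains exactly $a_3(q-a_3)$ minimal representatives of SR-asymmetric cosets of cardinality $2$.
   Context: Identify $\mathbb{Z}_n$ with $\{0,\ldots,n-1\}$, all arithmetic modulo $n$. The $q$-adic 4-tuple $(a_0,a_1,a_2,a_3)$ denotes $a_0+a_1q+a_2q^2+a_3q^3$ with $0\le a_i<q$. The cyclotomic coset of $x$ with respect to $q^2$ is $I_x=\{x,\,q^2x\bmod n\}$; its minimal representative is its least element. The (Hermitian) reciprocal coset of $I_x$ is $I_{n-qx}$. $I_x$ is symmetric if $I_{n-qx}=I_x$ and asymmetric otherwise; for an asymmetric pair with minimal representatives $x<y$, $I_x$ is FR-asymmetric and $I_y$ is SR-asymmetric. For $0\le a<q-1$, $0\le b<q$, the interlude $[(a,b,a,b),(a+1,b,a+1,b)]_M$ is the set of integers $x$ with $(a,b,a,b)<x<(a+1,b,a+1,b)$ that are minimal representatives of a coset of cardinality $2$. *)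

theory Defs
  imports "HOL-Computational_Algebra.Primes"
begin

definition prime_power :: "nat \<Rightarrow> bool" where
  "prime_power q \<longleftrightarrow> (\<exists>p k. prime p \<and> k \<ge> 1 \<and> q = p ^ k)"

definition modn :: "nat \<Rightarrow> nat" where
  "modn q = q ^ 4 - 1"

definition qtuple :: "nat \<Rightarrow> nat \<Rightarrow> nat \<Rightarrow> nat \<Rightarrow> nat \<Rightarrow> nat" where
  "qtuple q a0 a1 a2 a3 = a0 + a1 * q + a2 * q ^ 2 + a3 * q ^ 3"

definition ccoset :: "nat \<Rightarrow> nat \<Rightarrow> nat set" where
  "ccoset q x = {x mod modn q, (q ^ 2 * x) mod modn q}"

definition is_min_rep :: "nat \<Rightarrow> nat \<Rightarrow> bool" where
  "is_min_rep q x \<longleftrightarrow> x < modn q \<and> x = Min (ccoset q x)"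

definition recip :: "nat \<Rightarrow> nat \<Rightarrow> nat" where
  "recip q x = (modn q - (q * x) mod modn q) mod modn q"

definition symmetric_coset :: "nat \<Rightarrow> nat \<Rightarrow> bool" where
  "symmetric_coset q x \<longleftrightarrow> ccoset q (recip q x) = ccoset q x"

definition SR_asymmetric :: "nat \<Rightarrow> nat \<Rightarrow> bool" where
  "SR_asymmetric q x \<longleftrightarrow> \<not> symmetric_coset q x \<and>
     Min (ccoset q (recip q x)) < Min (ccoset q x)"

end

theory Submission
  imports Defs
begin

lemma lex_less:
  fixes a b c d Q :: nat
  assumes "b < Q" "d < Q"
  shows "(a*Q+b < c*Q+d) = (a<c \<or> a=c \<and> b<d)"
proof
  assume h: "a*Q+b < c*Q+d"
  have "a \<le> c"
  proof (rule ccontr)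
    assume "\<not> a \<le> c" then have "Suc c \<le> a" by simp
    then have "Suc c * Q \<le> a * Q" by (rule mult_le_mono1)
    then show False using h assms by simp
  qed
  then show "a<c \<or> a=c \<and> b<d" using h by auto
next
  assume "a<c \<or> a=c \<and> b<d"
  then show "a*Q+b < c*Q+d"
  proof
    assume "a<c" then have "Suc a * Q \<le> c * Q" by (intro mult_le_mono1) simp
    then show ?thesis using assms by simp
  qed simp
qed

lemma lex_eq:
  fixes a b c d Q :: nat
  assumes "b < Q" "d < Q"
  shows "(a*Q+b = c*Q+d) = (a=c \<and> b=d)"
  using lex_less[OF assms(1,2), of a c] lex_less[OF assms(2,1), of c a] by auto

lemma n_eq: "q \<ge> 1 \<Longrightarrow> modn q + 1 = q^2 * q^2"
  unfolding modn_def by (simp add: power_add[symmetric])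

lemma nQ: assumes "q \<ge> 1" shows "modn q = (q^2 - 1) * q^2 + (q^2 - 1)"
proof -
  obtain k where k: "q^2 = Suc k" using assms by (metis gr0_implies_Suc le_less_trans power_eq_0_iff zero_less_one not_less zero_less_power2 neq0_conv less_le)
  show ?thesis using n_eq[OF assms] unfolding k by simp
qed

lemma swap:
  fixes q A B :: nat
  assumes q: "q \<ge> 1" and A: "A < q^2" and B: "B < q^2" and x: "A*q^2+B < modn q"
  shows "(q^2*(A*q^2+B)) mod modn q = B*q^2 + A" and "B*q^2 + A < modn q"
proof -
  let ?Q = "q^2"
  note n = nQ[OF q]
  have "?Q - 1 < ?Q" using q by simp
  from x have "A < ?Q - 1 \<or> B < ?Q - 1" unfolding n lex_less[OF B \<open>?Q - 1 < ?Q\<close>] by auto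
  then show lt: "B*?Q + A < modn q" unfolding n lex_less[OF A \<open>?Q - 1 < ?Q\<close>] using A B by auto
  have "?Q*(A*?Q+B) = A*(?Q*?Q) + B*?Q" by (simp add: algebra_simps)
  also have "\<dots> = A*(modn q + 1) + B*?Q" using n_eq[OF q] by simp
  also have "\<dots> = B*?Q + A + A * modn q" by (simp add: algebra_simps)
  finally show "(?Q*(A*?Q+B)) mod modn q = B*?Q + A" using lt by simp
qed

lemma dig: fixes a b m q :: nat shows "a<m \<Longrightarrow> b<q \<Longrightarrow> a*q+b < m*q"
  using lex_less[of b q 0 a m] by simp

lemma p4: fixes p :: nat shows "p*((p+1)^3+(p+1)^2+(p+1)+1)+1 = (p+1)^4"
  by (simp add: numeral_eq_Suc algebra_simps)

lemma recip_digits: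
  fixes q d0 d1 d2 d3 x :: nat
  assumes q: "q \<ge> 2" and d: "d0 < q" "d1 < q" "d2 < q - 1" "d3 < q"
    and x: "x = (d3*q+d2)*q^2 + (d1*q+d0)" and x0: "0 < x"
  shows "recip q x = ((q-1-d2)*q + (q-1-d1))*q^2 + ((q-1-d0)*q + (q-1-d3))"
proof -
  define N where "N = modn q"
  define y where "y = ((d2*q+d1)*q + d0)*q + d3"
  define M where "M = q^2*q"
  have M4: "q^4 = q*M" unfolding M_def by (simp add: numeral_eq_Suc)
  have M1: "M \<ge> 1" unfolding M_def using q by simp
  have N4: "q^4 = N + 1" unfolding N_def modn_def using q by simp
  have "q*x + d3 = d3*q^4 + y" unfolding x y_def by (simp add: numeral_eq_Suc algebra_simps)
  then have qx: "q*x = y + d3*N" using N4 by (simp add: algebra_simps)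
  have r1: "d1*q + d0 < q*q" using d by (intro dig) auto
  have r: "(d1*q + d0)*q + d3 < M" unfolding M_def power2_eq_square using r1 d by (intro dig) auto
  have "(q-1)*M + M = q*M" using q by (metis Suc_diff_1 add.commute mult_Suc le_trans one_le_numeral less_le_trans zero_less_one le_less_trans not_less)
  then have Nf: "N = (q-1)*M + (M - 1)" using N4 M4 M1 by simp
  have y': "y = d2*M + ((d1*q + d0)*q + d3)" unfolding y_def M_def by (simp add: power2_eq_square algebra_simps)
  have yl: "y < N" unfolding Nf y'
    using lex_less[of "(d1*q + d0)*q + d3" "M" "M - 1" d2 "q-1"] r d M1 by simp
  have y0: "0 < y" using x0 q unfolding x y_def by auto
  have m: "(q*x) mod N = y" using qx yl by simp
  define R where "R = ((q-1-d2)*q + (q-1-d1))*q^2 + ((q-1-d0)*q + (q-1-d3))"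
  define p where "p = q - 1"
  have p: "q = p + 1" unfolding p_def using q by simp
  define e0 where "e0 = p - d0"
  define e1 where "e1 = p - d1"
  define e2 where "e2 = p - d2"
  define e3 where "e3 = p - d3"
  have e: "d0 + e0 = p" "d1 + e1 = p" "d2 + e2 = p" "d3 + e3 = p"
    unfolding e0_def e1_def e2_def e3_def p_def using d by auto
  have R: "R = ((e2*q + e1)*q^2 + (e0*q + e3))" unfolding R_def e0_def e1_def e2_def e3_def p_def by simp
  have "R + y = (d2+e2)*q^3 + (d1+e1)*q^2 + (d0+e0)*q + (d3+e3)"
    unfolding R y_def by (simp add: numeral_eq_Suc algebra_simps)
  also have "\<dots> = p*((p+1)^3+(p+1)^2+(p+1)+1)" unfolding e p by (simp add: algebra_simps)
  finally have "R + y + 1 = (p+1)^4" using p4[of p] by simp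
  then have "R + y = N" using N4 p by simp
  then show ?thesis unfolding recip_def N_def[symmetric] m R_def[symmetric] using y0 yl by simp
qed

lemma cc:
  assumes q: "q \<ge> 1" and A: "A < q^2" and B: "B < q^2" and x: "A*q^2+B < modn q"
  shows "ccoset q (A*q^2+B) = {A*q^2+B, B*q^2+A}"
  unfolding ccoset_def using swap[OF q A B x] x by simp

lemma SR_char:
  fixes q a2 a3 B :: nat
  assumes q: "q \<ge> 2" and a: "a2 < q" "a3 < q" "a2 + a3 < q - 1"
    and cB: "a3*q+a2 < B" and BQ: "B < q^2"
  shows "is_min_rep q ((a3*q+a2)*q^2 + B)" "card (ccoset q ((a3*q+a2)*q^2 + B)) = 2"
    "SR_asymmetric q ((a3*q+a2)*q^2 + B) \<longleftrightarrow> q - a3 \<le> B mod q"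
proof -
  define c where "c = a3*q+a2"
  define Q where "Q = q^2"
  define x where "x = c*Q + B"
  have q1: "q \<ge> 1" and Qq: "Q = q*q" using q unfolding Q_def by (auto simp: power2_eq_square)
  have Q1: "Q - 1 < Q" using q1 unfolding Qq by simp
  have "a3*q+a2 < (q-1)*q + (q-1)" using lex_less[of a2 q "q-1" a3 "q-1"] a by auto
  also have "\<dots> = Q - 1" unfolding Qq using q1 by (simp add: algebra_simps)
  finally have cQ: "c < Q - 1" unfolding c_def .
  have BQ': "B < Q" using BQ Q_def by simp
  have xn: "x < modn q" unfolding nQ[OF q1] Q_def[symmetric] x_def
    using lex_less[OF BQ' Q1, of c "Q-1"] cQ by simp
  have cQ': "c < Q" using cQ by simp
  have ccx: "ccoset q x = {x, B*Q + c}" unfolding x_def Q_def using cc[OF q1] cQ' BQ' xn unfolding x_def Q_def by simp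
  have xlt: "x < B*Q + c" unfolding x_def using lex_less[OF BQ' cQ', of c B] cB c_def by simp
  show "is_min_rep q ((a3*q+a2)*q^2 + B)" unfolding c_def[symmetric] Q_def[symmetric] x_def[symmetric] is_min_rep_def
    using ccx xlt xn by simp
  show "card (ccoset q ((a3*q+a2)*q^2 + B)) = 2" unfolding c_def[symmetric] Q_def[symmetric] x_def[symmetric]
    using ccx xlt by simp
  define d0 where "d0 = B mod q"
  define d1 where "d1 = B div q"
  have Bd: "B = d1*q + d0" unfolding d0_def d1_def by simp
  have d0q: "d0 < q" unfolding d0_def using q by simp
  have d1q: "d1 < q" unfolding d1_def using BQ' Qq by (simp add: less_mult_imp_div_less)
  have rx: "recip q x = ((q-1-a2)*q + (q-1-d1))*q^2 + ((q-1-d0)*q + (q-1-a3))"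
    apply (rule recip_digits[OF q d0q d1q _ a(2)])
    using a apply simp
    unfolding x_def c_def Q_def Bd apply simp
    using cB Bd q by (cases "d1 = 0") auto
  define H where "H = (q-1-a2)*q + (q-1-d1)"
  define L where "L = (q-1-d0)*q + (q-1-a3)"
  have HQ: "H < Q" unfolding H_def Qq using q1 by (intro dig) auto
  have LQ: "L < Q" unfolding L_def Qq using q1 by (intro dig) auto
  have "(2::nat)^4 \<le> q^4" using q by (intro power_mono) auto
  then have n0: "modn q > 0" unfolding modn_def by simp
  have rn: "recip q x < modn q" unfolding recip_def using n0 by simp
  have ccr: "ccoset q (recip q x) = {H*Q+L, L*Q+H}" unfolding rx H_def[symmetric] L_def[symmetric] Q_def[symmetric]
    using cc[OF q1, of H L] HQ LQ rn unfolding rx H_def[symmetric] L_def[symmetric] Q_def by simp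
  have "a3 < q-1-a2" using a by arith
  then have cH: "c < H" unfolding c_def H_def using lex_less[of a2 q "q-1-d1" a3 "q-1-a2"] a q by simp
  have mx: "Min (ccoset q x) = x" using ccx xlt by simp
  have SR: "SR_asymmetric q x \<longleftrightarrow> \<not> symmetric_coset q x \<and> min (H*Q+L) (L*Q+H) < x"
    unfolding SR_asymmetric_def mx ccr by simp
  show "SR_asymmetric q ((a3*q+a2)*q^2 + B) \<longleftrightarrow> q - a3 \<le> B mod q"
    unfolding c_def[symmetric] Q_def[symmetric] x_def[symmetric] d0_def[symmetric]
  proof
    assume "SR_asymmetric q x"
    then have m: "min (H*Q+L) (L*Q+H) < x" using SR by simp
    show "q - a3 \<le> d0"
    proof (rule ccontr)
      assume "\<not> q - a3 \<le> d0"
      then have "a3 < q-1-d0 \<or> a3 = q-1-d0 \<and> a2 < q-1-a3" using a by arith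
      then have cL: "c < L" unfolding c_def L_def using lex_less[of a2 q "q-1-a3" a3 "q-1-d0"] a by simp
      have "x < H*Q+L" unfolding x_def using lex_less[OF BQ' LQ, of c H] cH by simp
      moreover have "x < L*Q+H" unfolding x_def using lex_less[OF BQ' HQ, of c L] cL by simp
      ultimately show False using m by simp
    qed
  next
    assume "q - a3 \<le> d0"
    then have "q-1-d0 < a3" using a d0q by arith
    then have Lc: "L < c" unfolding c_def L_def using lex_less[of "q-1-a3" q a2 "q-1-d0" a3] a by simp
    have "L*Q+H < x" unfolding x_def using lex_less[OF HQ BQ', of L c] Lc by simp
    moreover have "\<not> symmetric_coset q x" unfolding symmetric_coset_def ccr ccx
    proof
      assume "{H*Q+L, L*Q+H} = {x, B*Q + c}"
      then have "L*Q+H = c*Q+B \<or> L*Q+H = B*Q+c" unfolding x_def by blast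
      moreover have "L*Q+H \<noteq> c*Q+B" using lex_eq[OF HQ BQ', of L c] Lc by simp
      moreover have "L*Q+H \<noteq> B*Q+c" using lex_eq[OF HQ cQ', of L B] Lc cB c_def by simp
      ultimately show False by blast
    qed
    ultimately show "SR_asymmetric q x" using SR by simp
  qed
qed

theorem mainTheorem15:
  fixes q a2 a3 :: nat
  assumes "prime_power q"
    and "a2 < q" and "a3 < q" and "a2 + a3 < q - 1"
  shows "card {x. qtuple q a2 a3 a2 a3 < x \<and> x < qtuple q (a2+1) a3 (a2+1) a3
              \<and> is_min_rep q x \<and> card (ccoset q x) = 2 \<and> SR_asymmetric q x}
         = a3 * (q - a3)"
proof -
  note a = assms(2,3,4)
  have q: "q \<ge> 2" using a by linarith
  have q1: "q \<ge> 1" using q by simp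
  define c where "c = a3*q+a2"
  define Q where "Q = q^2"
  have Qq: "Q = q*q" unfolding Q_def by (simp add: power2_eq_square)
  have lo: "qtuple q a2 a3 a2 a3 = c*Q + c" unfolding qtuple_def c_def Q_def
    by (simp add: algebra_simps power3_eq_cube power2_eq_square)
  have hi: "qtuple q (a2+1) a3 (a2+1) a3 = (c+1)*Q + (c+1)" unfolding qtuple_def c_def Q_def
    by (simp add: algebra_simps power3_eq_cube power2_eq_square)
  have "a3*q+a2 < (q-1)*q + (q-1)" using lex_less[of a2 q "q-1" a3 "q-1"] a by auto
  also have "\<dots> = Q - 1" unfolding Qq using q1 by (simp add: algebra_simps)
  finally have cQ: "c < Q - 1" unfolding c_def .
  have cQ': "c < Q" "c + 1 < Q" using cQ by auto
  define f where "f = (\<lambda>(b0::nat,b1::nat). c*Q + (b1*q+b0))"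
  define T where "T = {q-a3..<q} \<times> {a3..<q}"
  let ?S = "{x. qtuple q a2 a3 a2 a3 < x \<and> x < qtuple q (a2+1) a3 (a2+1) a3
              \<and> is_min_rep q x \<and> card (ccoset q x) = 2 \<and> SR_asymmetric q x}"
  have S: "?S = f ` T"
  proof
    show "f ` T \<subseteq> ?S"
    proof
      fix x assume "x \<in> f ` T"
      then obtain b0 b1 where b: "q - a3 \<le> b0" "b0 < q" "a3 \<le> b1" "b1 < q" and x: "x = c*Q + (b1*q+b0)"
        unfolding f_def T_def by auto
      define B where "B = b1*q+b0"
      have "a2 < b0" using b a by arith
      then have cB: "c < B" unfolding c_def B_def using lex_less[of a2 q b0 a3 b1] a b by auto
      have BQ: "B < Q" unfolding B_def Qq using b by (intro dig) auto
      have Bm: "B mod q = b0" unfolding B_def using b by simp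
      have "x < (c+1)*Q + (c+1)" unfolding x B_def[symmetric] using BQ by simp
      moreover have "c*Q + c < x" unfolding x B_def[symmetric] using cB by simp
      ultimately show "x \<in> ?S" unfolding lo hi using SR_char[OF q a, of B] cB BQ b Bm
        unfolding x B_def[symmetric] c_def Q_def by simp
    qed
  next
    show "?S \<subseteq> f ` T"
    proof
      fix x assume "x \<in> ?S"
      then have xS: "qtuple q a2 a3 a2 a3 < x" "x < qtuple q (a2+1) a3 (a2+1) a3"
              "is_min_rep q x" "card (ccoset q x) = 2" "SR_asymmetric q x" by blast+
      then have xn: "x < modn q" unfolding is_min_rep_def by simp
      define A where "A = x div Q"
      define B where "B = x mod Q"
      have xAB: "x = A*Q + B" unfolding A_def B_def by simp
      have BQ: "B < Q" unfolding B_def Qq using q by simp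
      have "modn q < Q*Q" using n_eq[OF q1] unfolding Q_def by simp
      then have AQ: "A < Q" unfolding A_def using xn by (simp add: less_mult_imp_div_less)
      have ccx: "ccoset q x = {x, B*Q+A}" using cc[OF q1, of A B] AQ BQ xn unfolding xAB Q_def by simp
      have "x \<noteq> B*Q+A" using xS ccx by auto
      then have AB: "A \<noteq> B" unfolding xAB by auto
      have "x \<le> B*Q+A" using xS ccx unfolding is_min_rep_def by (simp add: min_def split: if_splits)
      then have "\<not> B*Q+A < A*Q+B" unfolding xAB by simp
      then have AB2: "A < B" using lex_less[OF AQ BQ, of B A] AB by auto
      have "c*Q + c < A*Q + B" using xS unfolding lo xAB by simp
      then have i1: "c < A \<or> c = A \<and> c < B" using lex_less[OF cQ'(1) BQ, of c A] by simp
      have "A*Q + B < (c+1)*Q + (c+1)" using xS unfolding hi xAB by simp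
      then have i2: "A < c+1 \<or> A = c+1 \<and> B < c+1" using lex_less[OF BQ cQ'(2), of A "c+1"] by simp
      have Ac: "A = c" and cB: "c < B" using i1 i2 AB2 by auto
      have SR: "SR_asymmetric q x" using xS by simp
      then have b0: "q - a3 \<le> B mod q" using SR_char(3)[OF q a cB[unfolded c_def]] BQ xAB Ac
        unfolding c_def Q_def by simp
      have Bd: "B = (B div q)*q + B mod q" by simp
      have "c < (B div q)*q + B mod q" using cB by simp
      then have "a3 < B div q \<or> a3 = B div q \<and> a2 < B mod q" unfolding c_def
        using lex_less[of a2 q "B mod q" a3 "B div q"] a q by simp
      then have b1: "a3 \<le> B div q" by auto
      have b1q: "B div q < q" using BQ unfolding Qq by (simp add: less_mult_imp_div_less)
      have "(B mod q, B div q) \<in> T" unfolding T_def using b0 b1 b1q q by simp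
      moreover have "x = f (B mod q, B div q)" unfolding f_def xAB Ac using Bd by simp
      ultimately show "x \<in> f ` T" by blast
    qed
  qed
  have inj: "inj_on f T"
  proof (rule inj_onI)
    fix u v assume "u \<in> T" "v \<in> T" "f u = f v"
    then show "u = v" unfolding f_def T_def
      by (auto simp: lex_eq)
  qed
  have "card ?S = card T" unfolding S using card_image[OF inj] .
  also have "\<dots> = a3 * (q - a3)" unfolding T_def using a by (simp add: card_cartesian_product)
  finally show ?thesis .
qed

end
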